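(* Let $t$ be a term with $\mathrm{ofv}(t)=\emptyset$. The following are equivalent: (1) $t$ is $\to_w$-normal; (2) $t$ is $\to_y$-normal; (3) $t$ is a strict answer, i.e. generated by $a_s ::= v\mid a_s[x\backslash a_s']$ with $x\in\mathrm{fv}(a_s)$.
   Context: Terms: $t ::= x \mid \lambda x.t \mid t\,u \mid t[x\backslash u]$ ($t[x\backslash u]$ an explicit substitution binding $x$ in $t$; terms up to $\alpha$). Values $v ::= \lambda x.t$. Shallow free variables: $\mathrm{ofv}(x)=\{x\}$, $\mathrm{ofv}(\lambda x.t)=\emptyset$, $\mathrm{ofv}(tu)=\mathrm{ofv}(t)\cup\mathrm{ofv}(u)$, $\mathrm{ofv}(t[x\backslash u])=(\mathrm{ofv}(t)\setminus\{x\})\cup\mathrm{ofv}(u)$. Substitution contexts $S ::= \langle\cdot\rangle\mid S[x\backslash u]$. Weak contexts $W ::= \langle\cdot\rangle \mid W\,t \mid t\,W \mid t[x\backslash W] \mid W[x\backslash u]$; for a class of contexts, $K\langle\langle t\rangle\rangle$ is plugging without capture of free variables of $t$. Root rules: $S\langle\lambda x.t\rangle u\mapsto_m S\langle t[x\backslash u]\rangle$; for a class of contexts $K$, $K\langle\langle x\rangle\rangle[x\backslash u]\mapsto_{e_K} K\langle\langle u\rangle\rangle[x\backslash u]$; $t[x\backslash S\langle v\rangle]\mapsto_{gcv} S\langle t\rangle$ if $x\notin\mathrm{fv}(t)$. $\to_w$ is the union of the closures under weak contexts of $\mapsto_m$, $\mapsto_{e_W}$ (with $K$ = weak contexts) and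 $\mapsto_{gcv}$. Call-by-silly strategy: answers $a ::= v\mid a[x\backslash a']$; name contexts $N ::= \langle\cdot\rangle\mid N t\mid N[x\backslash t]$; auxiliary contexts $A ::= \langle\cdot\rangle\mid a[x\backslash A]\mid A[x\backslash t]$; silly contexts $Y ::= A\langle N\rangle$. $\to_{ym} := Y\langle\mapsto_m\rangle$; $\to_{yeAY} := A\langle\mapsto_{e_Y}\rangle$; $\to_{yeYN} := Y\langle\mapsto_{e_N}\rangle$; $\to_{ygcv}:=Y\langle\mapsto_{gcv}\rangle$ (closures of the root rules under the indicated contexts); $\to_y$ is their union. *)

theory Defs
  imports Main
begin

section \<open>Terms with explicit substitutions (de Bruijn indices, so terms are up to alpha)\<close>

text \<open>ES t u represents t[x\u]: the binder x is index 0 in t; u lies outside the binder.\<close>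
datatype trm = Var nat | Lam trm | App trm trm | ES trm trm

text \<open>free variables (as de Bruijn indices relative to the top level)\<close>
fun fv :: "trm \<Rightarrow> nat set" where
  "fv (Var n) = {n}"
| "fv (Lam t) = {n. Suc n \<in> fv t}"
| "fv (App t u) = fv t \<union> fv u"
| "fv (ES t u) = {n. Suc n \<in> fv t} \<union> fv u"

fun ofv :: "trm \<Rightarrow> nat set" where
  "ofv (Var n) = {n}"
| "ofv (Lam t) = {}"
| "ofv (App t u) = ofv t \<union> ofv u"
| "ofv (ES t u) = {n. Suc n \<in> ofv t} \<union> ofv u"

fun lift :: "nat \<Rightarrow> nat \<Rightarrow> trm \<Rightarrow> trm" where
  "lift k c (Var n) = Var (if n < c then n else n + k)"
| "lift k c (Lam t) = Lam (lift k (Suc c) t)"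
| "lift k c (App t u) = App (lift k c t) (lift k c u)"
| "lift k c (ES t u) = ES (lift k (Suc c) t) (lift k c u)"

text \<open>down c t: remove (unused) index c, decrementing the free indices above it\<close>
fun down :: "nat \<Rightarrow> trm \<Rightarrow> trm" where
  "down c (Var n) = Var (if n < c then n else n - 1)"
| "down c (Lam t) = Lam (down (Suc c) t)"
| "down c (App t u) = App (down c t) (down c u)"
| "down c (ES t u) = ES (down (Suc c) t) (down c u)"

definition is_value :: "trm \<Rightarrow> bool" where
  "is_value t \<longleftrightarrow> (\<exists>b. t = Lam b)"

datatype ctx = Hole | CAppL ctx trm | CAppR trm ctx | CLam ctx | CESL ctx trm | CESR trm ctx

text \<open>plain plugging (may capture)\<close>
fun plug :: "ctx \<Rightarrow> trm \<Rightarrow> trm" where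
  "plug Hole s = s"
| "plug (CAppL C u) s = App (plug C s) u"
| "plug (CAppR t C) s = App t (plug C s)"
| "plug (CLam C) s = Lam (plug C s)"
| "plug (CESL C u) s = ES (plug C s) u"
| "plug (CESR t C) s = ES t (plug C s)"

fun depth :: "ctx \<Rightarrow> nat" where
  "depth Hole = 0"
| "depth (CAppL C u) = depth C"
| "depth (CAppR t C) = depth C"
| "depth (CLam C) = Suc (depth C)"
| "depth (CESL C u) = Suc (depth C)"
| "depth (CESR t C) = depth C"

text \<open>plugging without capture: K<<s>> where s's free variables refer to the outside of K\<close>
definition plug_nc :: "ctx \<Rightarrow> trm \<Rightarrow> trm" where
  "plug_nc C s = plug C (lift (depth C) 0 s)"

fun comp :: "ctx \<Rightarrow> ctx \<Rightarrow> ctx" where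
  "comp Hole D = D"
| "comp (CAppL C u) D = CAppL (comp C D) u"
| "comp (CAppR t C) D = CAppR t (comp C D)"
| "comp (CLam C) D = CLam (comp C D)"
| "comp (CESL C u) D = CESL (comp C D) u"
| "comp (CESR t C) D = CESR t (comp C D)"

inductive sctx :: "ctx \<Rightarrow> bool" where
  "sctx Hole"
| "sctx S \<Longrightarrow> sctx (CESL S u)"

inductive wctx :: "ctx \<Rightarrow> bool" where
  "wctx Hole"
| "wctx W \<Longrightarrow> wctx (CAppL W t)"
| "wctx W \<Longrightarrow> wctx (CAppR t W)"
| "wctx W \<Longrightarrow> wctx (CESR t W)"
| "wctx W \<Longrightarrow> wctx (CESL W u)"

inductive root_m :: "trm \<Rightarrow> trm \<Rightarrow> bool" where
  "sctx S \<Longrightarrow> root_m (App (plug S (Lam t)) u) (plug S (ES t (lift (depth S) 0 u)))"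

text \<open>K<<x>>[x\u] \<mapsto> K<<u>>[x\u], K ranging over the class of contexts P\<close>
inductive root_e :: "(ctx \<Rightarrow> bool) \<Rightarrow> trm \<Rightarrow> trm \<Rightarrow> bool" for P where
  "P K \<Longrightarrow> root_e P (ES (plug_nc K (Var 0)) u) (ES (plug_nc K (lift 1 0 u)) u)"

text \<open>t[x\S<v>] \<mapsto> S<t> if x not free in t\<close>
inductive root_gcv :: "trm \<Rightarrow> trm \<Rightarrow> bool" where
  "sctx S \<Longrightarrow> is_value v \<Longrightarrow> 0 \<notin> fv t \<Longrightarrow>
     root_gcv (ES t (plug S v)) (plug_nc S (down 0 t))"

definition ctx_closure :: "(ctx \<Rightarrow> bool) \<Rightarrow> (trm \<Rightarrow> trm \<Rightarrow> bool) \<Rightarrow> trm \<Rightarrow> trm \<Rightarrow> bool" where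
  "ctx_closure P R s s' \<longleftrightarrow> (\<exists>C l r. P C \<and> R l r \<and> s = plug C l \<and> s' = plug C r)"

definition step_w :: "trm \<Rightarrow> trm \<Rightarrow> bool" where
  "step_w s s' \<longleftrightarrow> ctx_closure wctx root_m s s' \<or> ctx_closure wctx (root_e wctx) s s'
                   \<or> ctx_closure wctx root_gcv s s'"

inductive answer :: "trm \<Rightarrow> bool" where
  "answer (Lam t)"
| "answer a \<Longrightarrow> answer a' \<Longrightarrow> answer (ES a a')"

inductive strict_answer :: "trm \<Rightarrow> bool" where
  "strict_answer (Lam t)"
| "strict_answer a \<Longrightarrow> strict_answer a' \<Longrightarrow> 0 \<in> fv a \<Longrightarrow> strict_answer (ES a a')"

inductive nctx :: "ctx \<Rightarrow> bool" where
  "nctx Hole"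
| "nctx N \<Longrightarrow> nctx (CAppL N t)"
| "nctx N \<Longrightarrow> nctx (CESL N t)"

inductive actx :: "ctx \<Rightarrow> bool" where
  "actx Hole"
| "answer a \<Longrightarrow> actx A \<Longrightarrow> actx (CESR a A)"
| "actx A \<Longrightarrow> actx (CESL A t)"

definition yctx :: "ctx \<Rightarrow> bool" where
  "yctx Y \<longleftrightarrow> (\<exists>A N. actx A \<and> nctx N \<and> Y = comp A N)"

definition step_y :: "trm \<Rightarrow> trm \<Rightarrow> bool" where
  "step_y s s' \<longleftrightarrow> ctx_closure yctx root_m s s'
                  \<or> ctx_closure actx (root_e yctx) s s'
                  \<or> ctx_closure yctx (root_e nctx) s s'
                  \<or> ctx_closure yctx root_gcv s s'"

definition normal :: "(trm \<Rightarrow> trm \<Rightarrow> bool) \<Rightarrow> trm \<Rightarrow> bool" where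
  "normal R t \<longleftrightarrow> \<not> (\<exists>t'. R t t')"

end

theory Submission
  imports Defs
begin

lemma plug_comp[simp]: "plug (comp C D) s = plug C (plug D s)"
  by (induction C) auto

lemma depth_comp[simp]: "depth (comp C D) = depth C + depth D"
  by (induction C) auto

lemma plug_nc_var0: "plug_nc K (Var 0) = plug K (Var (depth K))"
  by (simp add: plug_nc_def)

lemma cc_mono: "ctx_closure P R s s' \<Longrightarrow> (\<And>C. P C \<Longrightarrow> Q C) \<Longrightarrow> ctx_closure Q R s s'"
  unfolding ctx_closure_def by blast

lemma cc_lift: "ctx_closure P R s s' \<Longrightarrow> (\<And>C. P C \<Longrightarrow> P (E C)) \<Longrightarrow>
   (\<And>C x. plug (E C) x = G (plug C x)) \<Longrightarrow> ctx_closure P R (G s) (G s')"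
  unfolding ctx_closure_def by metis

lemma cc_root: "P Hole \<Longrightarrow> R l r \<Longrightarrow> ctx_closure P R l r"
  unfolding ctx_closure_def by (rule exI[of _ Hole]) auto

lemma re_mono: "root_e P l r \<Longrightarrow> (\<And>C. P C \<Longrightarrow> Q C) \<Longrightarrow> root_e Q l r"
  by (induction rule: root_e.induct) (rule root_e.intros; blast)

lemma wctx_comp: "wctx A \<Longrightarrow> wctx N \<Longrightarrow> wctx (comp A N)"
  by (induction rule: wctx.induct) (auto intro: wctx.intros)

lemma actx_w: "actx A \<Longrightarrow> wctx A"
  by (induction rule: actx.induct) (auto intro: wctx.intros)

lemma nctx_w: "nctx A \<Longrightarrow> wctx A"
  by (induction rule: nctx.induct) (auto intro: wctx.intros)

lemma yctx_w: "yctx A \<Longrightarrow> wctx A"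
  unfolding yctx_def using wctx_comp actx_w nctx_w by blast

lemma nctx_y: "nctx N \<Longrightarrow> yctx N"
  unfolding yctx_def by (rule exI[of _ Hole]) (auto intro: actx.intros)

lemma yctx_ESL: "yctx C \<Longrightarrow> yctx (CESL C u)"
  unfolding yctx_def
  by (metis actx.intros(3) comp.simps(5))

lemma yctx_ESR: "answer a \<Longrightarrow> yctx C \<Longrightarrow> yctx (CESR a C)"
  unfolding yctx_def
  by (metis actx.intros(2) comp.simps(6))

lemma step_y_w: "step_y s s' \<Longrightarrow> step_w s s'"
  unfolding step_y_def step_w_def
  apply (elim disjE)
  subgoal apply (rule disjI1) by (erule cc_mono) (rule yctx_w)
  subgoal apply (rule disjI2, rule disjI1) unfolding ctx_closure_def
    by (metis actx_w yctx_w re_mono)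
  subgoal apply (rule disjI2, rule disjI1) unfolding ctx_closure_def
    by (metis nctx_w yctx_w re_mono)
  subgoal apply (rule disjI2, rule disjI2) by (erule cc_mono) (rule yctx_w)
  done

lemma step_y_ESL: "step_y s s' \<Longrightarrow> step_y (ES s u) (ES s' u)"
  unfolding step_y_def
  apply (elim disjE)
  subgoal apply (rule disjI1) by (rule cc_lift[where E="\<lambda>C. CESL C u"]) (auto intro: yctx_ESL)
  subgoal apply (rule disjI2, rule disjI1) by (rule cc_lift[where E="\<lambda>C. CESL C u"]) (auto intro: actx.intros)
  subgoal apply (rule disjI2, rule disjI2, rule disjI1) by (rule cc_lift[where E="\<lambda>C. CESL C u"]) (auto intro: yctx_ESL)
  subgoal apply (rule disjI2, rule disjI2, rule disjI2) by (rule cc_lift[where E="\<lambda>C. CESL C u"]) (auto intro: yctx_ESL)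
  done

lemma step_y_ESR: "answer a \<Longrightarrow> step_y s s' \<Longrightarrow> step_y (ES a s) (ES a s')"
  unfolding step_y_def
  apply (elim disjE)
  subgoal apply (rule disjI1) by (rule cc_lift[where E="\<lambda>C. CESR a C"]) (auto intro: yctx_ESR)
  subgoal apply (rule disjI2, rule disjI1) by (rule cc_lift[where E="\<lambda>C. CESR a C"]) (auto intro: actx.intros)
  subgoal apply (rule disjI2, rule disjI2, rule disjI1) by (rule cc_lift[where E="\<lambda>C. CESR a C"]) (auto intro: yctx_ESR)
  subgoal apply (rule disjI2, rule disjI2, rule disjI2) by (rule cc_lift[where E="\<lambda>C. CESR a C"]) (auto intro: yctx_ESR)
  done

definition stepN :: "trm \<Rightarrow> trm \<Rightarrow> bool" where
  "stepN s s' \<longleftrightarrow> ctx_closure nctx root_m s s' \<or> ctx_closure nctx (root_e nctx) s s'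
                   \<or> ctx_closure nctx root_gcv s s'"

lemma stepN_y: "stepN s s' \<Longrightarrow> step_y s s'"
  unfolding stepN_def step_y_def using cc_mono nctx_y by blast

lemma stepN_lift:
  assumes "stepN s s'" "\<And>C. nctx C \<Longrightarrow> nctx (E C)" "\<And>C x. plug (E C) x = G (plug C x)"
  shows "stepN (G s) (G s')"
  using assms unfolding stepN_def using cc_lift[of nctx _ s s' E G] by blast

inductive_cases sa_App: "strict_answer (App a b)"
inductive_cases sa_Var: "strict_answer (Var n)"
inductive_cases sa_ES: "strict_answer (ES a b)"

lemma sa_sub: "wctx W \<Longrightarrow> strict_answer (plug W s) \<Longrightarrow> strict_answer s"
  by (induction W rule: wctx.induct) (auto elim: sa_App sa_ES)

lemma sa_normal_w: assumes "strict_answer s" "step_w s s'" shows False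
  using assms(2) unfolding step_w_def ctx_closure_def
proof (elim disjE exE conjE)
  fix C l r assume "wctx C" "root_m l r" "s = plug C l"
  then show False using sa_sub assms(1) by (auto elim!: root_m.cases sa_App)
next
  fix C l r assume a: "wctx C" "root_e wctx l r" "s = plug C l"
  then have "strict_answer l" using sa_sub assms(1) by auto
  from a(2) obtain K u where K: "wctx K" "l = ES (plug K (Var (depth K))) u"
    by (auto elim!: root_e.cases simp: plug_nc_var0)
  with \<open>strict_answer l\<close> have "strict_answer (plug K (Var (depth K)))" by (auto elim: sa_ES)
  with K(1) have "strict_answer (Var (depth K))" by (rule sa_sub)
  then show False by (rule sa_Var)
next
  fix C l r assume "wctx C" "root_gcv l r" "s = plug C l"
  then show False using sa_sub assms(1) by (auto elim!: root_gcv.cases sa_ES)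
qed

lemma sa_answer: "strict_answer s \<Longrightarrow> answer s"
  by (induction rule: strict_answer.induct) (auto intro: answer.intros)

lemma sa_shape: "strict_answer s \<Longrightarrow> \<exists>S b. sctx S \<and> s = plug S (Lam b)"
proof (induction rule: strict_answer.induct)
  case (1 t) then show ?case by (metis plug.simps(1) sctx.intros(1))
next
  case (2 a a')
  then obtain S b where "sctx S" "a = plug S (Lam b)" by blast
  then show ?case by (metis plug.simps(5) sctx.intros(2))
qed

lemma sctx_not_App: "sctx S \<Longrightarrow> plug S (Lam b) \<noteq> App x y"
  by (cases rule: sctx.cases) auto

lemma lemD: "(\<exists>t'. stepN t t') \<or> (\<exists>N n. nctx N \<and> t = plug N (Var (depth N + n)))
   \<or> (\<exists>S b. sctx S \<and> t = plug S (Lam b))"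
proof (induction t)
  case (Var x)
  then show ?case by (metis add_0 depth.simps(1) nctx.intros(1) plug.simps(1))
next
  case (Lam t)
  then show ?case by (metis plug.simps(1) sctx.intros(1))
next
  case (App t1 t2)
  from App(1) show ?case
  proof (elim disjE exE conjE)
    fix t' assume "stepN t1 t'"
    then have "stepN (App t1 t2) (App t' t2)"
      by (rule stepN_lift[where E="\<lambda>C. CAppL C t2"]) (auto intro: nctx.intros)
    then show ?thesis by blast
  next
    fix N n assume "nctx N" "t1 = plug N (Var (depth N + n))"
    then have "nctx (CAppL N t2) \<and> App t1 t2 = plug (CAppL N t2) (Var (depth (CAppL N t2) + n))"
      by (auto intro: nctx.intros)
    then show ?thesis by blast
  next
    fix S b assume "sctx S" "t1 = plug S (Lam b)"
    then have "root_m (App t1 t2) (plug S (ES b (lift (depth S) 0 t2)))"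
      by (auto intro: root_m.intros)
    then have "stepN (App t1 t2) (plug S (ES b (lift (depth S) 0 t2)))"
      unfolding stepN_def by (auto intro: cc_root nctx.intros)
    then show ?thesis by blast
  qed
next
  case (ES t1 t2)
  from ES(1) show ?case
  proof (elim disjE exE conjE)
    fix t' assume "stepN t1 t'"
    then have "stepN (ES t1 t2) (ES t' t2)"
      by (rule stepN_lift[where E="\<lambda>C. CESL C t2"]) (auto intro: nctx.intros)
    then show ?thesis by blast
  next
    fix N n assume N: "nctx N" "t1 = plug N (Var (depth N + n))"
    show ?thesis
    proof (cases n)
      case 0
      then have "root_e nctx (ES t1 t2) (ES (plug_nc N (lift 1 0 t2)) t2)"
        using N root_e.intros[of nctx N t2] by (simp add: plug_nc_var0)
      then have "stepN (ES t1 t2) (ES (plug_nc N (lift 1 0 t2)) t2)"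
        unfolding stepN_def by (auto intro: cc_root nctx.intros)
      then show ?thesis by blast
    next
      case (Suc m)
      with N have "nctx (CESL N t2) \<and> ES t1 t2 = plug (CESL N t2) (Var (depth (CESL N t2) + m))"
        by (auto intro: nctx.intros)
      then show ?thesis by blast
    qed
  next
    fix S b assume "sctx S" "t1 = plug S (Lam b)"
    then have "sctx (CESL S t2) \<and> ES t1 t2 = plug (CESL S t2) (Lam b)"
      by (auto intro: sctx.intros)
    then show ?thesis by blast
  qed
qed

lemma ofv_actx: "actx A \<Longrightarrow> (depth A + n) \<in> ofv s \<Longrightarrow> n \<in> ofv (plug A s)"
  by (induction A arbitrary: n rule: actx.induct) auto

lemma ofv_nctx: "nctx A \<Longrightarrow> (depth A + n) \<in> ofv s \<Longrightarrow> n \<in> ofv (plug A s)"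
  by (induction A arbitrary: n rule: nctx.induct) auto

lemma ofv_yctx: "yctx K \<Longrightarrow> n \<in> ofv (plug K (Var (depth K + n)))"
  unfolding yctx_def
proof (elim exE conjE)
  fix A N assume a: "actx A" "nctx N" "K = comp A N"
  have "(depth A + n) \<in> ofv (plug N (Var (depth N + (depth A + n))))"
    using ofv_nctx[OF a(2)] by simp
  then show ?thesis using a ofv_actx[OF a(1)] by (simp add: add.commute add.left_commute)
qed

lemma lemF: "normal step_y t \<Longrightarrow> (\<exists>K n. yctx K \<and> t = plug K (Var (depth K + n))) \<or> strict_answer t"
proof (induction t)
  case (Var x)
  have "yctx Hole" by (simp add: nctx.intros(1) nctx_y)
  then show ?case by (metis add_0 depth.simps(1) plug.simps(1))
next
  case (Lam t)
  then show ?case by (auto intro: strict_answer.intros)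
next
  case (App t1 t2)
  from lemD[of "App t1 t2"] show ?case
  proof (elim disjE exE conjE)
    fix t' assume "stepN (App t1 t2) t'"
    then show ?thesis using App(3) stepN_y unfolding normal_def by blast
  next
    fix N n assume "nctx N" "App t1 t2 = plug N (Var (depth N + n))"
    then show ?thesis using nctx_y by blast
  next
    fix S b assume "sctx S" "App t1 t2 = plug S (Lam b)"
    then show ?thesis using sctx_not_App by metis
  qed
next
  case (ES t1 t2)
  have n1: "normal step_y t1" using ES(3) step_y_ESL unfolding normal_def by blast
  from ES(1)[OF n1] show ?case
  proof (elim disjE exE conjE)
    fix K n assume K: "yctx K" "t1 = plug K (Var (depth K + n))"
    show ?thesis
    proof (cases n)
      case 0
      then have "root_e yctx (ES t1 t2) (ES (plug_nc K (lift 1 0 t2)) t2)"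
        using K root_e.intros[of yctx K t2] by (simp add: plug_nc_var0)
      then have "step_y (ES t1 t2) (ES (plug_nc K (lift 1 0 t2)) t2)"
        unfolding step_y_def by (auto intro: cc_root actx.intros)
      then show ?thesis using ES(3) unfolding normal_def by blast
    next
      case (Suc m)
      with K have "yctx (CESL K t2) \<and> ES t1 t2 = plug (CESL K t2) (Var (depth (CESL K t2) + m))"
        by (auto intro: yctx_ESL)
      then show ?thesis by blast
    qed
  next
    assume s1: "strict_answer t1"
    have n2: "normal step_y t2" using ES(3) step_y_ESR sa_answer[OF s1] unfolding normal_def by blast
    from ES(2)[OF n2] show ?thesis
    proof (elim disjE exE conjE)
      fix K n assume K: "yctx K" "t2 = plug K (Var (depth K + n))"
      then have "yctx (CESR t1 K) \<and> ES t1 t2 = plug (CESR t1 K) (Var (depth (CESR t1 K) + n))"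
        using s1 sa_answer yctx_ESR by auto
      then show ?thesis by blast
    next
      assume s2: "strict_answer t2"
      show ?thesis
      proof (cases "0 \<in> fv t1")
        case True
        then show ?thesis using s1 s2 by (auto intro: strict_answer.intros)
      next
        case False
        obtain S b where S: "sctx S" "t2 = plug S (Lam b)" using sa_shape[OF s2] by blast
        have "root_gcv (ES t1 t2) (plug_nc S (down 0 t1))"
          using S False root_gcv.intros[of S "Lam b" t1] by (simp add: is_value_def)
        then have "step_y (ES t1 t2) (plug_nc S (down 0 t1))"
          unfolding step_y_def by (auto intro!: cc_root nctx_y nctx.intros)
        then show ?thesis using ES(3) unfolding normal_def by blast
      qed
    qed
  qed
qed

theorem lemma11p3:
  fixes t :: trm
  assumes "ofv t = {}"
  shows "(normal step_w t \<longleftrightarrow> normal step_y t) \<and> (normal step_y t \<longleftrightarrow> strict_answer t)"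
proof -
  have A: "strict_answer t \<Longrightarrow> normal step_w t" using sa_normal_w unfolding normal_def by metis
  have B: "normal step_w t \<Longrightarrow> normal step_y t" using step_y_w unfolding normal_def by blast
  have C: "normal step_y t \<Longrightarrow> strict_answer t"
    using lemF ofv_yctx assms by blast
  show ?thesis using A B C by blast
qed

end
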